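(* Let $(p_i)_{i\geq1}$ enumerate the odd primes and let $\Lambda_1=(1,1)\mathbb{Z}+(0,2)\mathbb{Z}$, $\Lambda_2=\mathbb{Z}\times2\mathbb{Z}$, $\Lambda_{2i+1}=(2p_i,1)\mathbb{Z}+(0,2)\mathbb{Z}$ and $\Lambda_{2i+2}=(2^{i+1},1)\mathbb{Z}+(0,2)\mathbb{Z}$ for $i\geq1$. Let $\mathcal{M}_\mathscr{B}=\bigcup_{i\geq1}\Lambda_i$, $\mathcal{F}_\mathscr{B}=\mathbb{Z}^2\setminus\mathcal{M}_\mathscr{B}$, $\eta=\mathbb{1}_{\mathcal{F}_\mathscr{B}}$ and $X_\eta$ its orbit closure under the $\mathbb{Z}^2$-shift. Then $\mathcal{F}_\mathscr{B}=\{-2,0,2\}\times(2\mathbb{Z}+1)$, the system $(X_\eta,(S_{\mathbf{n}})_{\mathbf{n}\in\mathbb{Z}^2})$ is proximal, and there is no infinite pairwise coprime family $\{\widetilde\Lambda_j\}_{j\geq1}$ of proper lattices in $\mathbb{Z}^2$ with $\bigcup_{j\geq1}\widetilde\Lambda_j\subseteq\mathcal{M}_\mathscr{B}$.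
   Context: A lattice in $\mathbb{Z}^2$ is a subgroup of finite index; proper lattices $\Lambda,\Lambda'$ are coprime if $\Lambda+\Lambda'=\mathbb{Z}^2$. Shift: $(S_{\mathbf{n}}x)_{\mathbf{g}}=x_{\mathbf{g}+\mathbf{n}}$ on $\{0,1\}^{\mathbb{Z}^2}$ with the product topology; $X_\eta$ is the closure of the orbit of $\eta$. A system is proximal if every pair $(x,y)$ of its points satisfies $\liminf_{\mathbf{n}\to\infty}D(S_{\mathbf{n}}x,S_{\mathbf{n}}y)=0$ for a compatible metric $D$. *)

theory Defs
  imports "HOL-Analysis.Analysis" "HOL-Library.Liminf_Limsup"
begin

type_synonym pt = "int \<times> int"
type_synonym config = "pt \<Rightarrow> bool"

definition padd :: "pt \<Rightarrow> pt \<Rightarrow> pt" where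
  "padd a b = (fst a + fst b, snd a + snd b)"

definition is_lattice :: "pt set \<Rightarrow> bool" where
  "is_lattice L \<longleftrightarrow> (0, 0) \<in> L
     \<and> (\<forall>a\<in>L. \<forall>b\<in>L. padd a b \<in> L)
     \<and> (\<forall>a\<in>L. (- fst a, - snd a) \<in> L)
     \<and> finite ((\<lambda>g. (\<lambda>l. padd g l) ` L) ` UNIV)"

definition proper_lattice :: "pt set \<Rightarrow> bool" where
  "proper_lattice L \<longleftrightarrow> is_lattice L \<and> L \<noteq> UNIV"

definition lattice_coprime :: "pt set \<Rightarrow> pt set \<Rightarrow> bool" where
  "lattice_coprime L L' \<longleftrightarrow> {padd a b | a b. a \<in> L \<and> b \<in> L'} = UNIV"

definition gen2 :: "pt \<Rightarrow> pt \<Rightarrow> pt set" where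
  "gen2 v w = {(k * fst v + m * fst w, k * snd v + m * snd w) | k m. True}"

definition Lam1 :: "pt set" where "Lam1 = gen2 (1, 1) (0, 2)"
definition Lam2 :: "pt set" where "Lam2 = UNIV \<times> {y. even y}"
text \<open>Lambda_{2i+1} for the odd prime p = p_i.\<close>
definition LamOdd :: "int \<Rightarrow> pt set" where "LamOdd p = gen2 (2 * p, 1) (0, 2)"
definition LamEven :: "nat \<Rightarrow> pt set" where "LamEven i = gen2 (2 ^ (i + 1), 1) (0, 2)"

definition M_B :: "pt set" where
  "M_B = Lam1 \<union> Lam2 \<union> (\<Union>p\<in>{p::int. prime p \<and> odd p}. LamOdd p)
         \<union> (\<Union>i\<in>{i::nat. i \<ge> 1}. LamEven i)"

definition F_B :: "pt set" where "F_B = UNIV - M_B"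

definition eta :: config where "eta g = (g \<in> F_B)"

definition shift :: "pt \<Rightarrow> config \<Rightarrow> config" where
  "shift n x = (\<lambda>g. x (padd g n))"

definition prod_top :: "config topology" where
  "prod_top = product_topology (\<lambda>_. discrete_topology (UNIV :: bool set)) UNIV"

definition orbit_closure :: "config \<Rightarrow> config set" where
  "orbit_closure x = prod_top closure_of {shift n x | n. True}"

definition D :: "config \<Rightarrow> config \<Rightarrow> real" where
  "D x y = (if x = y then 0 else
     inverse (2 ^ (LEAST k::nat. \<exists>g. \<bar>fst g\<bar> \<le> int k \<and> \<bar>snd g\<bar> \<le> int k \<and> x g \<noteq> y g)))"

text \<open>Proximality: liminf over n -> infinity in Z^2 (cofinite filter) of D(S_n x, S_n y) is 0.\<close>
definition proximal :: "config set \<Rightarrow> bool" where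
  "proximal X \<longleftrightarrow> (\<forall>x\<in>X. \<forall>y\<in>X.
      Liminf cofinite (\<lambda>n. ereal (D (shift n x) (shift n y))) = 0)"

end

theory Submission imports Defs begin

lemma mem_gen2: "(a,b) \<in> gen2 v w \<longleftrightarrow> (\<exists>k m. a = k * fst v + m * fst w \<and> b = k * snd v + m * snd w)"
  by (auto simp: gen2_def)

lemma pow2_dec: "t \<noteq> (0::int) \<Longrightarrow> \<exists>i s. t = 2^i * s \<and> odd s"
proof (induction "nat \<bar>t\<bar>" arbitrary: t rule: less_induct)
  case less
  show ?case
  proof (cases "odd t")
    case True then show ?thesis by (rule_tac x=0 in exI) auto
  next
    case False
    then obtain u where u: "t = 2*u" by auto
    with less.prems have "nat \<bar>u\<bar> < nat \<bar>t\<bar>" "u \<noteq> 0" by auto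
    from less.hyps[OF this] obtain i s where "u = 2^i * s" "odd s" by blast
    with u show ?thesis by (rule_tac x="Suc i" in exI) auto
  qed
qed

lemma F_B_eq: "F_B = {-2, 0, 2} \<times> {y. odd y}"
proof (intro set_eqI iffI)
  fix g :: pt assume g: "g \<in> F_B"
  obtain x y where gxy: "g = (x,y)" by fastforce
  have nM: "(x,y) \<notin> M_B" using g gxy by (simp add: F_B_def)
  have yo: "odd y" using nM by (auto simp: M_B_def Lam2_def)
  have xe: "even x"
  proof (rule ccontr)
    assume "odd x"
    then obtain m where "y - x = 2*m" using yo by (metis even_diff evenE odd_add odd_one)
    then have "(x,y) \<in> Lam1" unfolding Lam1_def mem_gen2 by (rule_tac x=x in exI, rule_tac x=m in exI) auto
    with nM show False by (simp add: M_B_def)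
  qed
  then obtain t where xt: "x = 2*t" by auto
  have "t \<in> {-1,0,1}"
  proof (rule ccontr)
    assume tn: "t \<notin> {-1,0,1}"
    show False
    proof (cases "even t")
      case True
      from tn have "t \<noteq> 0" by auto
      from pow2_dec[OF this] obtain i s where iss: "t = 2^i * s" "odd s" by blast
      have "i \<ge> 1" using iss True by (cases i) auto
      obtain m where m: "y - s = 2*m" using yo iss(2) by (metis even_diff evenE odd_add odd_one)
      have "(x,y) \<in> LamEven i" unfolding LamEven_def mem_gen2
        by (rule_tac x=s in exI, rule_tac x=m in exI) (use iss xt m in auto)
      with \<open>i \<ge> 1\<close> nM show False by (auto simp: M_B_def)
    next
      case False
      have "\<not> is_unit t" using tn by (auto simp: zdvd1_eq abs_if split: if_splits)
      moreover have "t \<noteq> 0" using False by auto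
      ultimately obtain p where p: "p dvd t" "prime p" using prime_divisor_exists by blast
      have "p \<ge> 0" using p(2) by (simp add: prime_ge_0_int)
      have po: "odd p" using p False by (meson dvd_trans)
      obtain s where s: "t = p * s" using p(1) by auto
      have so: "odd s" using s False by auto
      obtain m where m: "y - s = 2*m" using yo so by (metis even_diff evenE odd_add odd_one)
      have "(x,y) \<in> LamOdd p" unfolding LamOdd_def mem_gen2
        by (rule_tac x=s in exI, rule_tac x=m in exI) (use s xt m in auto)
      with p po nM show False by (auto simp: M_B_def)
    qed
  qed
  then show "g \<in> {-2, 0, 2} \<times> {y. odd y}" using gxy xt yo by auto
next
  fix g :: pt assume g: "g \<in> {-2, 0, 2} \<times> {y. odd y}"
  obtain x y where gxy: "g = (x,y)" by fastforce
  have x: "x \<in> {-2,0,2}" and yo: "odd y" using g gxy by auto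
  have "(x,y) \<notin> Lam1"
  proof
    assume "(x,y) \<in> Lam1"
    then obtain k m where "x = k" "y = k + 2*m" unfolding Lam1_def mem_gen2 by auto
    with x yo show False by auto
  qed
  moreover have "(x,y) \<notin> Lam2" using yo by (simp add: Lam2_def)
  moreover have "(x,y) \<notin> LamOdd p" if p: "prime p" "odd p" for p
  proof
    assume "(x,y) \<in> LamOdd p"
    then obtain k m where km0: "x = k * (2*p)" "y = k + m*2" unfolding LamOdd_def mem_gen2 by auto
    then have km: "x = 2*p*k" "y = k + 2*m" by auto
    have ko: "odd k" using km yo by auto
    have "p \<ge> 2" using p(1) prime_ge_2_int by blast
    then have "p \<ge> 3" using p(2) by presburger
    have "\<bar>k\<bar> \<ge> 1" using ko by (cases "k = 0") auto
    moreover have "\<bar>p*k\<bar> = p * \<bar>k\<bar>" using \<open>p \<ge> 3\<close> by (simp add: abs_mult)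
    moreover have "p * \<bar>k\<bar> \<ge> 3 * 1" using \<open>p \<ge> 3\<close> \<open>\<bar>k\<bar> \<ge> 1\<close> by (intro mult_mono) auto
    ultimately have "\<bar>p*k\<bar> \<ge> 3" by simp
    moreover have "\<bar>x\<bar> = 2 * \<bar>p*k\<bar>" using km by (simp add: abs_mult)
    ultimately show False using x by auto
  qed
  moreover have "(x,y) \<notin> LamEven i" if i1: "i \<ge> 1" for i
  proof
    assume "(x,y) \<in> LamEven i"
    then obtain k m where km: "x = 2^(i+1)*k" "y = k + 2*m" unfolding LamEven_def mem_gen2 by auto
    have ko: "odd k" using km yo by auto
    obtain j where "i = Suc j" using i1 by (cases i) auto
    then have "(2::int)^(i+1) = 4 * 2^j" by simp
    then have "(4::int) dvd 2^(i+1)" by simp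
    then have "4 dvd x" using km by simp
    moreover have "x \<noteq> 0" using km ko by auto
    ultimately show False using x by auto
  qed
  ultimately show "g \<in> F_B" using gxy by (auto simp: F_B_def M_B_def)
qed

lemma lat_zero: "is_lattice L \<Longrightarrow> (0,0) \<in> L" by (simp add: is_lattice_def)
lemma lat_add: "is_lattice L \<Longrightarrow> a \<in> L \<Longrightarrow> b \<in> L \<Longrightarrow> padd a b \<in> L"
  unfolding is_lattice_def by blast
lemma lat_neg: "is_lattice L \<Longrightarrow> a \<in> L \<Longrightarrow> (- fst a, - snd a) \<in> L"
  unfolding is_lattice_def by blast

lemma lat_mult_nat:
  assumes L: "is_lattice L" and u: "u \<in> L"
  shows "(int k * fst u, int k * snd u) \<in> L"
proof (induction k)
  case 0 then show ?case using lat_zero[OF L] by simp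
next
  case (Suc k)
  have "padd (int k * fst u, int k * snd u) u \<in> L" using lat_add[OF L Suc u] .
  then show ?case by (simp add: padd_def algebra_simps)
qed

lemma lat_mult:
  assumes L: "is_lattice L" and u: "u \<in> L"
  shows "(k * fst u, k * snd u) \<in> L"
proof (cases "k \<ge> 0")
  case True
  then show ?thesis using lat_mult_nat[OF L u, of "nat k"] by simp
next
  case False
  have e: "int (nat (-k)) = -k" using False by simp
  have "(int (nat (-k)) * fst u, int (nat (-k)) * snd u) \<in> L" by (rule lat_mult_nat[OF L u])
  then have "(-k * fst u, -k * snd u) \<in> L" unfolding e .
  then have "(- (-k * fst u), - (-k * snd u)) \<in> L"
    using lat_neg[OF L] by fastforce
  then show ?thesis by simp
qed

lemma zero_odd_notin: "odd y \<Longrightarrow> (0, y) \<notin> M_B"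
  using F_B_eq by (auto simp: F_B_def)

lemma det_even:
  assumes L: "is_lattice L" and LM: "L \<subseteq> M_B" and ab: "(a,b) \<in> L" and cd: "(c,d) \<in> L"
  shows "even (a*d - b*c)"
proof (rule ccontr)
  assume o: "odd (a*d - b*c)"
  have "(c*a, c*b) \<in> L" using lat_mult[OF L ab, of c] by simp
  moreover have "(-a*c, -a*d) \<in> L" using lat_mult[OF L cd, of "-a"] by simp
  ultimately have "padd (c*a, c*b) (-a*c, -a*d) \<in> L" using lat_add[OF L] by blast
  then have "(0, c*b - a*d) \<in> L" by (simp add: padd_def algebra_simps)
  moreover have "odd (c*b - a*d)" proof -
    have "c*b - a*d = -(a*d - b*c)" by (simp add: algebra_simps)
    then show ?thesis using o by (simp add: disj_commute)
  qed
  ultimately show False using LM zero_odd_notin by blast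
qed

lemma classes:
  assumes L: "is_lattice L" and LM: "L \<subseteq> M_B"
  shows "(\<forall>g\<in>L. even (snd g)) \<or> (\<forall>g\<in>L. even (fst g)) \<or> (\<forall>g\<in>L. even (fst g + snd g))"
proof (rule ccontr)
  assume "\<not> ?thesis"
  then have "\<exists>g\<in>L. odd (snd g)" "\<exists>g\<in>L. odd (fst g)" "\<exists>g\<in>L. odd (fst g + snd g)" by auto
  then obtain g1 g2 g3 where "g1 \<in> L" "odd (snd g1)" "g2 \<in> L" "odd (fst g2)" "g3 \<in> L" "odd (fst g3 + snd g3)" by blast
  then obtain a b c d e f where u: "(a,b) \<in> L" "odd b" and v: "(c,d) \<in> L" "odd c"
    and w: "(e,f) \<in> L" "odd (e + f)" by (metis prod.collapse)
  have 1: "even (a*d - b*c)" by (rule det_even[OF L LM u(1) v(1)])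
  have 2: "even (a*f - b*e)" by (rule det_even[OF L LM u(1) w(1)])
  have "odd (b*c)" using u v by simp
  then have "odd (a*d)" using 1 by auto
  then have ao: "odd a" by simp
  show False
  proof (cases "even e")
    case True
    then have "odd f" using w by auto
    then show False using 2 ao True u by auto
  next
    case False
    then have "even f" using w by auto
    then show False using 2 ao False u by auto
  qed
qed

lemma not_coprime:
  assumes "\<forall>g\<in>L. Q g" "\<forall>g\<in>L'. Q g" "\<And>a b. Q a \<Longrightarrow> Q b \<Longrightarrow> Q (padd a b)" "\<not> Q z"
  shows "\<not> lattice_coprime L L'"
proof
  assume "lattice_coprime L L'"
  then have "z \<in> {padd a b | a b. a \<in> L \<and> b \<in> L'}" by (simp add: lattice_coprime_def)
  then show False using assms by auto
qed

lemma part3: "\<not> (\<exists>L :: nat \<Rightarrow> pt set.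
            (\<forall>j. proper_lattice (L j))
          \<and> (\<forall>j k. j \<noteq> k \<longrightarrow> lattice_coprime (L j) (L k))
          \<and> (\<Union>j. L j) \<subseteq> M_B)"
proof
  assume "\<exists>L :: nat \<Rightarrow> pt set. (\<forall>j. proper_lattice (L j))
          \<and> (\<forall>j k. j \<noteq> k \<longrightarrow> lattice_coprime (L j) (L k)) \<and> (\<Union>j. L j) \<subseteq> M_B"
  then obtain L :: "nat \<Rightarrow> pt set" where pl: "\<And>j. proper_lattice (L j)"
    and cop: "\<And>j k. j \<noteq> k \<Longrightarrow> lattice_coprime (L j) (L k)" and sub: "(\<Union>j. L j) \<subseteq> M_B" by blast
  have lat: "is_lattice (L j)" and LM: "L j \<subseteq> M_B" for j using pl sub by (auto simp: proper_lattice_def)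
  define Q1 where "Q1 = (\<lambda>g::pt. even (snd g))"
  define Q2 where "Q2 = (\<lambda>g::pt. even (fst g))"
  define Q3 where "Q3 = (\<lambda>g::pt. even (fst g + snd g))"
  define c where "c j = (if \<forall>g\<in>L j. Q1 g then 0 else if \<forall>g\<in>L j. Q2 g then 1 else (2::nat))" for j
  have c3: "c j = 2 \<Longrightarrow> \<forall>g\<in>L j. Q3 g" for j
    using classes[OF lat LM, of j] by (auto simp: c_def Q1_def Q2_def Q3_def split: if_splits)
  have c1: "c j = 1 \<Longrightarrow> \<forall>g\<in>L j. Q2 g" for j by (auto simp: c_def split: if_splits)
  have c0: "c j = 0 \<Longrightarrow> \<forall>g\<in>L j. Q1 g" for j by (auto simp: c_def split: if_splits)
  have cl: "c j < 3" for j by (simp add: c_def)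
  have same: "j \<noteq> k \<Longrightarrow> c j = c k \<Longrightarrow> False" for j k
  proof -
    assume jk: "j \<noteq> k" "c j = c k"
    have "c j = 0 \<or> c j = 1 \<or> c j = 2" using cl[of j] by auto
    then show False
    proof (elim disjE)
      assume "c j = 0"
      then show False using not_coprime[of "L j" Q1 "L k" "(0,1)"] c0[of j] c0[of k] jk cop[OF jk(1)]
        by (auto simp: Q1_def padd_def)
    next
      assume "c j = 1"
      then show False using not_coprime[of "L j" Q2 "L k" "(1,0)"] c1[of j] c1[of k] jk cop[OF jk(1)]
        by (auto simp: Q2_def padd_def)
    next
      assume "c j = 2"
      then show False using not_coprime[of "L j" Q3 "L k" "(1,0)"] c3[of j] c3[of k] jk cop[OF jk(1)]
        by (auto simp: Q3_def padd_def)
    qed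
  qed
  have "c 0 = c 1 \<or> c 0 = c 2 \<or> c 0 = c 3 \<or> c 1 = c 2 \<or> c 1 = c 3 \<or> c 2 = c 3"
    using cl[of 0] cl[of 1] cl[of 2] cl[of 3] by arith
  then show False using same[of 0 1] same[of 0 2] same[of 0 3] same[of 1 2] same[of 1 3] same[of 2 3] by auto
qed

definition Qs :: "config set" where
  "Qs = {x. \<forall>g h. x g \<and> x h \<longrightarrow> \<bar>fst g - fst h\<bar> \<le> 4}"

lemma topspace_prod_top: "topspace prod_top = UNIV"
  by (simp add: prod_top_def)

lemma closed_coord: "closedin prod_top {x. \<not> x g}"
proof -
  have "closedin prod_top {x \<in> topspace prod_top. x g \<in> {False}}"
    unfolding prod_top_def
    by (rule closedin_continuous_map_preimage[OF continuous_map_product_projection]) auto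
  then show ?thesis by (simp add: topspace_prod_top)
qed

lemma closed_Qs: "closedin prod_top Qs"
proof -
  have "Qs = \<Inter> {{x. \<not> x g} \<union> {x. \<not> x h} | g h. 4 < \<bar>fst g - fst (h::pt)\<bar>}"
  proof (intro set_eqI iffI)
    fix x assume xq: "x \<in> Qs"
    show "x \<in> \<Inter> {{x. \<not> x g} \<union> {x. \<not> x h} | g h. 4 < \<bar>fst g - fst (h::pt)\<bar>}"
    proof (rule InterI)
      fix S assume "S \<in> {{x. \<not> x g} \<union> {x. \<not> x h} | g h. 4 < \<bar>fst g - fst (h::pt)\<bar>}"
      then obtain g h where S: "S = {x. \<not> x g} \<union> {x. \<not> x h}" and gh: "4 < \<bar>fst g - fst (h::pt)\<bar>" by blast
      have "x g \<and> x h \<longrightarrow> \<bar>fst g - fst h\<bar> \<le> 4" using xq unfolding Qs_def by blast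
      with gh have "\<not> x g \<or> \<not> x h" by linarith
      then show "x \<in> S" unfolding S by blast
    qed
  next
    fix x assume xI: "x \<in> \<Inter> {{x. \<not> x g} \<union> {x. \<not> x h} | g h. 4 < \<bar>fst g - fst (h::pt)\<bar>}"
    show "x \<in> Qs" unfolding Qs_def
    proof (clarify)
      fix g h assume gh: "x g" "x h"
      show "\<bar>fst g - fst h\<bar> \<le> 4"
      proof (rule ccontr)
        assume "\<not> \<bar>fst g - fst h\<bar> \<le> 4"
        then have "{x. \<not> x g} \<union> {x. \<not> x h} \<in> {{x. \<not> x g} \<union> {x. \<not> x h} | g h. 4 < \<bar>fst g - fst (h::pt)\<bar>}"
          by (intro CollectI exI[of _ g] exI[of _ h]) auto
        with xI have "x \<in> {x. \<not> x g} \<union> {x. \<not> x h}" by blast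
        with gh show False by auto
      qed
    qed
  qed
  moreover have "closedin prod_top (\<Inter> {{x. \<not> x g} \<union> {x. \<not> x h} | g h. 4 < \<bar>fst g - fst (h::pt)\<bar>})"
  proof (rule closedin_Inter)
    have "{x. \<not> x (0,0)} \<union> {x. \<not> x (5,0)} \<in> {{x. \<not> x g} \<union> {x. \<not> x h} | g h. 4 < \<bar>fst g - fst (h::pt)\<bar>}"
      by (intro CollectI exI[of _ "(0,0)"] exI[of _ "(5,0)"]) auto
    then show "{{x. \<not> x g} \<union> {x. \<not> x h} | g h. 4 < \<bar>fst g - fst (h::pt)\<bar>} \<noteq> {}" by blast
  next
    fix S assume "S \<in> {{x. \<not> x g} \<union> {x. \<not> x h} | g h. 4 < \<bar>fst g - fst (h::pt)\<bar>}"
    then show "closedin prod_top S" using closed_coord by blast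
  qed
  ultimately show ?thesis by simp
qed

lemma orbit_Qs: "orbit_closure eta \<subseteq> Qs"
  unfolding orbit_closure_def
proof (rule closure_of_minimal[OF _ closed_Qs])
  show "{shift n eta |n. True} \<subseteq> Qs"
  proof (clarsimp simp: Qs_def)
    fix n a b c d
    assume "shift n eta (a,b)" "shift n eta (c,d)"
    then have "padd (a,b) n \<in> F_B" "padd (c,d) n \<in> F_B" by (auto simp: shift_def eta_def)
    then have "a + fst n \<in> {-2,0,2}" "c + fst n \<in> {-2,0,2}" by (auto simp: F_B_eq padd_def)
    then show "\<bar>a - c\<bar> \<le> 4" by auto
  qed
qed

lemma Qs_bound: "x \<in> Qs \<Longrightarrow> \<exists>c. \<forall>g. x g \<longrightarrow> fst g \<le> c"
proof (cases "\<exists>g. x g")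
  case True
  assume "x \<in> Qs"
  then obtain g0 where "x g0" using True by blast
  have "\<forall>g. x g \<longrightarrow> fst g \<le> fst g0 + 4"
  proof (intro allI impI)
    fix g assume "x g"
    with \<open>x g0\<close> \<open>x \<in> Qs\<close> have "\<bar>fst g - fst g0\<bar> \<le> 4" unfolding Qs_def by blast
    then show "fst g \<le> fst g0 + 4" by linarith
  qed
  then show ?thesis by blast
qed auto

lemma D_nonneg: "D x y \<ge> 0"
  by (simp add: D_def)

lemma D_small:
  assumes agree: "\<And>g. \<bar>fst g\<bar> \<le> int K \<Longrightarrow> \<bar>snd g\<bar> \<le> int K \<Longrightarrow> x g = y g"
  shows "D x y \<le> inverse (2 ^ K)"
proof (cases "x = y")
  case True then show ?thesis by (simp add: D_def)
next
  case False
  then obtain g where g: "x g \<noteq> y g" by blast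
  let ?P = "\<lambda>k::nat. \<exists>g. \<bar>fst g\<bar> \<le> int k \<and> \<bar>snd g\<bar> \<le> int k \<and> x g \<noteq> y g"
  have "?P (nat (max \<bar>fst g\<bar> \<bar>snd g\<bar>))" using g by (rule_tac x=g in exI) auto
  then have "?P (LEAST k. ?P k)" by (rule LeastI)
  then obtain g' where g': "\<bar>fst g'\<bar> \<le> int (LEAST k. ?P k)" "\<bar>snd g'\<bar> \<le> int (LEAST k. ?P k)" "x g' \<noteq> y g'"
    by blast
  have "K < (LEAST k. ?P k)"
  proof (rule ccontr)
    assume "\<not> K < (LEAST k. ?P k)"
    then have "int (LEAST k. ?P k) \<le> int K" by simp
    then have "x g' = y g'" using g' by (intro agree) linarith+
    with g' show False by simp
  qed
  then have "(2::real) ^ K \<le> 2 ^ (LEAST k. ?P k)" by (intro power_increasing) auto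
  then have "inverse ((2::real) ^ (LEAST k. ?P k)) \<le> inverse (2 ^ K)"
    by (intro le_imp_inverse_le) auto
  then show ?thesis using False by (simp add: D_def)
qed

lemma Liminf_filter_mono: "F \<le> G \<Longrightarrow> Liminf G f \<le> Liminf F (f :: _ \<Rightarrow> 'b::complete_lattice)"
  unfolding Liminf_def by (rule SUP_subset_mono) (auto simp: le_filter_def)

lemma prox_pair:
  assumes x: "x \<in> Qs" and y: "y \<in> Qs"
  shows "Liminf cofinite (\<lambda>n. ereal (D (shift n x) (shift n y))) = 0"
proof -
  obtain cx where cx: "\<And>g. x g \<Longrightarrow> fst g \<le> cx" using Qs_bound[OF x] by blast
  obtain cy where cy: "\<And>g. y g \<Longrightarrow> fst g \<le> cy" using Qs_bound[OF y] by blast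
  define gm where "gm = (\<lambda>m::nat. (int m, 0::int))"
  define f where "f = (\<lambda>m. D (shift (gm m) x) (shift (gm m) y))"
  have lim: "f \<longlonglongrightarrow> 0"
  proof (rule LIMSEQ_I)
    fix r :: real assume r: "0 < r"
    obtain K where K: "(1/2::real) ^ K < r" using real_arch_pow_inv[OF r, of "1/2"] by auto
    define N where "N = nat (max cx cy) + K + 1"
    have "norm (f n - 0) < r" if "n \<ge> N" for n
    proof -
      have "D (shift (gm n) x) (shift (gm n) y) \<le> inverse (2 ^ K)"
      proof (rule D_small)
        fix g :: pt assume "\<bar>fst g\<bar> \<le> int K" "\<bar>snd g\<bar> \<le> int K"
        then have big: "fst g + int n > max cx cy" using that unfolding N_def by linarith
        have "\<not> x (padd g (gm n))" using cx[of "padd g (gm n)"] big by (auto simp: padd_def gm_def)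
        moreover have "\<not> y (padd g (gm n))" using cy[of "padd g (gm n)"] big by (auto simp: padd_def gm_def)
        ultimately show "shift (gm n) x g = shift (gm n) y g" by (simp add: shift_def)
      qed
      moreover have "inverse ((2::real) ^ K) = (1/2) ^ K" by (simp add: power_one_over inverse_eq_divide)
      ultimately show ?thesis using K D_nonneg unfolding f_def by auto
    qed
    then show "\<exists>no. \<forall>n\<ge>no. norm (f n - 0) < r" by blast
  qed
  then have "((\<lambda>m. ereal (f m)) \<longlongrightarrow> ereal 0) sequentially" by (rule tendsto_ereal)
  then have "Liminf sequentially (\<lambda>m. ereal (f m)) = ereal 0" by (intro lim_imp_Liminf) auto
  then have L0: "Liminf sequentially (\<lambda>m. ereal (f m)) = 0" by (simp add: zero_ereal_def)
  have inj: "inj gm" by (auto simp: gm_def inj_def)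
  have filt: "filtermap gm sequentially \<le> cofinite"
  proof (clarsimp simp: le_filter_def eventually_filtermap)
    fix P :: "pt \<Rightarrow> bool" assume "eventually P cofinite"
    then have "finite {z. \<not> P z}" by (simp add: eventually_cofinite)
    then have "finite (gm -` {z. \<not> P z})" using inj by (intro finite_vimageI) auto
    then have "eventually (\<lambda>m. P (gm m)) cofinite" by (simp add: eventually_cofinite vimage_def)
    then show "eventually (\<lambda>m. P (gm m)) sequentially" by (simp add: cofinite_eq_sequentially)
  qed
  have "Liminf cofinite (\<lambda>n. ereal (D (shift n x) (shift n y)))
      \<le> Liminf (filtermap gm sequentially) (\<lambda>n. ereal (D (shift n x) (shift n y)))"
    by (rule Liminf_filter_mono[OF filt])
  also have "\<dots> \<le> Liminf sequentially (\<lambda>m. ereal (f m))"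
    unfolding f_def by (rule Liminf_filtermap_le)
  finally have le: "Liminf cofinite (\<lambda>n. ereal (D (shift n x) (shift n y))) \<le> 0" using L0 by simp
  have "0 \<le> Liminf cofinite (\<lambda>n. ereal (D (shift n x) (shift n y)))"
    by (rule Liminf_bounded) (simp add: D_nonneg)
  with le show ?thesis by simp
qed

lemma part2: "proximal (orbit_closure eta)"
  unfolding proximal_def using prox_pair orbit_Qs by blast

theorem mainTheorem12:
  shows "F_B = {-2, 0, 2} \<times> {y. odd y}
    \<and> proximal (orbit_closure eta)
    \<and> \<not> (\<exists>L :: nat \<Rightarrow> pt set.
            (\<forall>j. proper_lattice (L j))
          \<and> (\<forall>j k. j \<noteq> k \<longrightarrow> lattice_coprime (L j) (L k))
          \<and> (\<Union>j. L j) \<subseteq> M_B)"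
  using F_B_eq part2 part3 by blast

end
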